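(* Let $G$ be a totally disconnected locally compact group. Then $C_c^\infty(G)=\mathcal P(G)$.
   Context: $C_c^\infty(G)$ (the smooth functions) is the linear span of the characteristic functions $\chi_{xH}$ with $x\in G$ and $H$ a compact open subgroup of $G$; equivalently the union over compact open subgroups $H$ of the compactly supported continuous functions constant on the cosets $xH$. $\mathcal P(G)$ is the set of $f\in C_c(G)$ such that for some compact open subgroup $H$ of $G$ there exist finitely many $f_i\in C_c(G)$ and $\phi_i\in C(H)$ with $f(xh)=\sum_i f_i(x)\phi_i(h)$ for all $x\in G,h\in H$. *)

theory Defs
  imports "HOL-Analysis.Analysis" "HOL-Algebra.Algebra"
begin

definition topological_group :: "('a, 'b) monoid_scheme \<Rightarrow> 'a topology \<Rightarrow> bool" where
  "topological_group G T \<longleftrightarrow> group G \<and> topspace T = carrier G \<and>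
     continuous_map (prod_topology T T) T (\<lambda>p. fst p \<otimes>\<^bsub>G\<^esub> snd p) \<and>
     continuous_map T T (\<lambda>x. inv\<^bsub>G\<^esub> x)"

definition locally_compact_group :: "('a, 'b) monoid_scheme \<Rightarrow> 'a topology \<Rightarrow> bool" where
  "locally_compact_group G T \<longleftrightarrow> topological_group G T \<and> Hausdorff_space T \<and>
     locally_compact_space T"

definition totally_disconnected_space :: "'a topology \<Rightarrow> bool" where
  "totally_disconnected_space T \<longleftrightarrow> (\<forall>S. connectedin T S \<longrightarrow> (\<exists>a. S \<subseteq> {a}))"

definition compact_open_subgroup :: "('a, 'b) monoid_scheme \<Rightarrow> 'a topology \<Rightarrow> 'a set \<Rightarrow> bool" where
  "compact_open_subgroup G T H \<longleftrightarrow> subgroup H G \<and> openin T H \<and> compactin T H"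

definition Cc :: "'a topology \<Rightarrow> ('a \<Rightarrow> complex) set" where
  "Cc T = {f. continuous_map T euclidean f \<and>
              compactin T (T closure_of {x \<in> topspace T. f x \<noteq> 0}) \<and>
              (\<forall>x. x \<notin> topspace T \<longrightarrow> f x = 0)}"

text \<open>C_c^\<infinity>(G): the complex linear span of the characteristic functions of cosets xH,
  x in G, H a compact open subgroup.\<close>
definition smooth_functions :: "('a, 'b) monoid_scheme \<Rightarrow> 'a topology \<Rightarrow> ('a \<Rightarrow> complex) set" where
  "smooth_functions G T = {f. \<exists>(n::nat) (c::nat \<Rightarrow> complex) (x::nat \<Rightarrow> 'a) (H::nat \<Rightarrow> 'a set).
      (\<forall>i<n. x i \<in> carrier G \<and> compact_open_subgroup G T (H i)) \<and>
      f = (\<lambda>g. \<Sum>i<n. c i * indicator (x i <#\<^bsub>G\<^esub> H i) g)}"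

definition P_functions :: "('a, 'b) monoid_scheme \<Rightarrow> 'a topology \<Rightarrow> ('a \<Rightarrow> complex) set" where
  "P_functions G T = {f. f \<in> Cc T \<and> (\<exists>H. compact_open_subgroup G T H \<and>
      (\<exists>(n::nat) (fs::nat \<Rightarrow> 'a \<Rightarrow> complex) (\<phi>::nat \<Rightarrow> 'a \<Rightarrow> complex).
         (\<forall>i<n. fs i \<in> Cc T \<and> continuous_map (subtopology T H) euclidean (\<phi> i)) \<and>
         (\<forall>x\<in>carrier G. \<forall>h\<in>H. f (x \<otimes>\<^bsub>G\<^esub> h) = (\<Sum>i<n. fs i x * \<phi> i h))))}"

end

theory Submission
  imports Defs
begin

lemma compact_open_nbhd:
  assumes H: "Hausdorff_space XX" and lc: "locally_compact_space XX"
    and td: "totally_disconnected_space XX" and W: "openin XX W" and x: "x \<in> W"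
  shows "\<exists>A. openin XX A \<and> compactin XX A \<and> x \<in> A \<and> A \<subseteq> W"
proof -
  have "neighbourhood_base_of (compactin XX) XX"
    using locally_compact_space_neighbourhood_base[of XX] H lc by simp
  moreover have xt: "x \<in> topspace XX" using W x openin_subset by blast
  ultimately obtain U V where U: "openin XX U" and V: "compactin XX V" and xU: "x \<in> U"
    and UV: "U \<subseteq> V" and VW: "V \<subseteq> W"
    using W x unfolding neighbourhood_base_of_def neighbourhood_base_at_def by meson
  define Y where "Y = subtopology XX V"
  have Vt: "V \<subseteq> topspace XX" using V compactin_subset_topspace by blast
  have tY: "topspace Y = V" using Vt by (auto simp: Y_def)
  have cY: "compact_space Y" using V by (simp add: Y_def compact_space_subtopology)
  have hY: "Hausdorff_space Y" using H by (simp add: Y_def Hausdorff_space_subtopology)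
  have sx: "compactin Y {x}" using xU UV xt by (auto simp: Y_def compactin_subtopology)
  have cl: "closedin Y (V - U)"
  proof -
    have eq: "V - U = V - (V \<inter> U)" by blast
    have oVU: "openin Y (V \<inter> U)" unfolding Y_def using U by (auto simp: openin_subtopology)
    show ?thesis unfolding eq using closedin_diff[OF closedin_topspace oVU] tY by simp
  qed
  have dis: "disjnt C {x} \<or> disjnt C (V - U)" if "connectedin Y C" for C
  proof -
    have "connectedin XX C" using that by (simp add: Y_def connectedin_subtopology)
    then obtain a where "C \<subseteq> {a}" using td unfolding totally_disconnected_space_def by blast
    thus ?thesis using xU by (auto simp: disjnt_def)
  qed
  have "separated_between Y {x} (V - U)"
    by (rule cut_wire_fence_theorem_gen[OF cY _ sx cl dis]) (simp add: hY)
  then obtain A B where A: "openin Y A" and B: "openin Y B" and AB: "A \<union> B = topspace Y"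
    and dAB: "disjnt A B" and xA: "{x} \<subseteq> A" and VUB: "V - U \<subseteq> B"
    unfolding separated_between_def by blast
  have AU: "A \<subseteq> U" using AB VUB dAB tY by (auto simp: disjnt_def)
  obtain Ob where Ob: "openin XX Ob" and AO: "A = Ob \<inter> V"
    using A unfolding Y_def openin_subtopology by blast
  have "A = Ob \<inter> U" using AO AU UV by blast
  hence oA: "openin XX A" using Ob U by auto
  have "A = topspace Y - B" using AB dAB by (auto simp: disjnt_def)
  hence "closedin Y A" using B by auto
  hence "compactin Y A" using cY closedin_compact_space by blast
  hence "compactin XX A" by (simp add: Y_def compactin_subtopology)
  thus ?thesis using oA xA AU UV VW by blast
qed

locale tgrp = group G for G (structure) +
  fixes T :: "'a topology"
  assumes tg: "topological_group G T"
begin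

lemma top: "topspace T = carrier G"
  using tg by (simp add: topological_group_def)

lemma mult_cont: "continuous_map (prod_topology T T) T (\<lambda>p. fst p \<otimes> snd p)"
  using tg by (simp add: topological_group_def)

lemma inv_cont: "continuous_map T T (\<lambda>x. inv x)"
  using tg by (simp add: topological_group_def)

lemma lmult_cont:
  assumes g: "g \<in> carrier G"
  shows "continuous_map T T (\<lambda>y. g \<otimes> y)"
proof -
  have "continuous_map T (prod_topology T T) (\<lambda>y. (g, y))"
    using g by (intro continuous_map_pairedI) (auto simp: top)
  from continuous_map_compose[OF this mult_cont] show ?thesis by (simp add: o_def)
qed

lemma rmult_cont:
  assumes g: "g \<in> carrier G"
  shows "continuous_map T T (\<lambda>y. y \<otimes> g)"
proof -
  have "continuous_map T (prod_topology T T) (\<lambda>y. (y, g))"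
    using g by (intro continuous_map_pairedI) (auto simp: top)
  from continuous_map_compose[OF this mult_cont] show ?thesis by (simp add: o_def)
qed

lemma open_ltrans:
  assumes g: "g \<in> carrier G" and S: "openin T S"
  shows "openin T {y \<in> carrier G. g \<otimes> y \<in> S}"
  using openin_continuous_map_preimage[OF lmult_cont[OF g] S] top by simp

lemma open_subgroup_closed:
  assumes K: "subgroup K G" and o: "openin T K"
  shows "closedin T K"
proof -
  have "openin T (topspace T - K)"
  proof (subst openin_subopen, intro ballI)
    fix y assume y: "y \<in> topspace T - K"
    hence yc: "y \<in> carrier G" using top by auto
    let ?N = "{z \<in> carrier G. inv y \<otimes> z \<in> K}"
    have "openin T ?N" by (rule open_ltrans[OF inv_closed[OF yc] o])
    moreover have "y \<in> ?N" using yc subgroup.one_closed[OF K] by simp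
    moreover have "?N \<subseteq> topspace T - K"
    proof
      fix z assume z: "z \<in> ?N"
      have "z \<notin> K"
      proof
        assume zK: "z \<in> K"
        have "inv (inv y \<otimes> z) \<in> K" using z subgroup.m_inv_closed[OF K] by simp
        moreover have "inv (inv y \<otimes> z) = inv z \<otimes> y" using z yc by (simp add: inv_mult_group)
        ultimately have "inv z \<otimes> y \<in> K" by simp
        hence "z \<otimes> (inv z \<otimes> y) \<in> K" using zK subgroup.m_closed[OF K] by simp
        moreover have "z \<otimes> (inv z \<otimes> y) = y" using z yc by (simp add: m_assoc[symmetric])
        ultimately have "y \<in> K" by simp
        thus False using y by simp
      qed
      thus "z \<in> topspace T - K" using z top by auto
    qed
    ultimately show "\<exists>T'. openin T T' \<and> y \<in> T' \<and> T' \<subseteq> topspace T - K" by blast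
  qed
  moreover have "K \<subseteq> topspace T" using subgroup.subset[OF K] top by simp
  ultimately show ?thesis by (simp add: closedin_def)
qed

end

locale tdlc = tgrp +
  assumes haus: "Hausdorff_space T" and lc: "locally_compact_space T"
    and td: "totally_disconnected_space T"
begin

lemma vD:
  assumes W: "openin T W" and oneW: "\<one> \<in> W"
  shows "\<exists>K. compact_open_subgroup G T K \<and> K \<subseteq> W"
proof -
  obtain A where oA: "openin T A" and cA: "compactin T A" and oneA: "\<one> \<in> A" and AW: "A \<subseteq> W"
    using compact_open_nbhd[OF haus lc td W oneW] by blast
  have Ac: "A \<subseteq> carrier G" using oA openin_subset top by blast
  define M where "M = {p \<in> topspace (prod_topology T T). fst p \<otimes> snd p \<in> A}"
  have oM: "openin (prod_topology T T) M"
    unfolding M_def by (rule openin_continuous_map_preimage[OF mult_cont oA])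
  have "\<exists>Ob Q. openin T Ob \<and> openin T Q \<and> \<one> \<in> Ob \<and> a \<in> Q \<and> Ob \<times> Q \<subseteq> M" if a: "a \<in> A" for a
  proof -
    have "(\<one>, a) \<in> M" using a Ac by (auto simp: M_def top)
    thus ?thesis using oM unfolding openin_prod_topology_alt by blast
  qed
  then obtain Ob Q where OQ: "\<And>a. a \<in> A \<Longrightarrow> openin T (Ob a) \<and> openin T (Q a) \<and> \<one> \<in> Ob a \<and> a \<in> Q a \<and> Ob a \<times> Q a \<subseteq> M"
    by metis
  have "\<exists>F'. finite F' \<and> F' \<subseteq> Q ` A \<and> A \<subseteq> \<Union>F'"
    using cA unfolding compactin_def using OQ by (intro conjunct2[OF cA[unfolded compactin_def], rule_format]) auto
  then obtain F' where "finite F'" "F' \<subseteq> Q ` A" "A \<subseteq> \<Union>F'" by blast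
  then obtain F where F: "finite F" "F \<subseteq> A" and AF: "A \<subseteq> \<Union>(Q ` F)"
    by (metis finite_subset_image)
  define O0 where "O0 = topspace T \<inter> \<Inter>(Ob ` F)"
  have oO0: "openin T O0" unfolding O0_def using F OQ by (intro openin_Int_Inter) auto
  have oneO0: "\<one> \<in> O0" unfolding O0_def using F OQ top by auto
  have O0c: "O0 \<subseteq> carrier G" unfolding O0_def using top by auto
  have O0A: "u0 \<otimes> b \<in> A" if u0b: "u0 \<in> O0" "b \<in> A" for u0 b
  proof -
    obtain a where a: "a \<in> F" "b \<in> Q a" using AF u0b(2) by blast
    have "u0 \<in> Ob a" using u0b(1) a(1) unfolding O0_def by auto
    hence "(u0, b) \<in> M" using OQ[of a] a F by blast
    thus ?thesis by (simp add: M_def)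
  qed
  define V where "V = {g \<in> O0. inv g \<in> O0}"
  have oV: "openin T V"
  proof -
    have "openin T {x \<in> topspace T. inv x \<in> O0}"
      by (rule openin_continuous_map_preimage[OF inv_cont oO0])
    hence "openin T (O0 \<inter> {x \<in> topspace T. inv x \<in> O0})" using oO0 by auto
    moreover have "O0 \<inter> {x \<in> topspace T. inv x \<in> O0} = V" unfolding V_def using O0c top by auto
    ultimately show ?thesis by simp
  qed
  have oneV: "\<one> \<in> V" unfolding V_def using oneO0 by simp
  define K where "K = {g \<in> carrier G. \<forall>a\<in>A. g \<otimes> a \<in> A \<and> inv g \<otimes> a \<in> A}"
  have sK: "subgroup K G"
  proof
    show "K \<subseteq> carrier G" unfolding K_def by auto
    show "\<one> \<in> K" unfolding K_def using Ac by auto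
  next
    fix x y assume x: "x \<in> K" and y: "y \<in> K"
    have xc: "x \<in> carrier G" and yc: "y \<in> carrier G" using x y unfolding K_def by auto
    show "x \<otimes> y \<in> K" unfolding K_def
    proof (intro CollectI conjI ballI)
      show "x \<otimes> y \<in> carrier G" using xc yc by simp
      fix a assume a: "a \<in> A"
      have ac: "a \<in> carrier G" using a Ac by auto
      have "y \<otimes> a \<in> A" using y a unfolding K_def by auto
      hence "x \<otimes> (y \<otimes> a) \<in> A" using x unfolding K_def by auto
      thus "x \<otimes> y \<otimes> a \<in> A" using xc yc ac by (simp add: m_assoc)
      have "inv x \<otimes> a \<in> A" using x a unfolding K_def by auto
      hence "inv y \<otimes> (inv x \<otimes> a) \<in> A" using y unfolding K_def by auto
      thus "inv (x \<otimes> y) \<otimes> a \<in> A" using xc yc ac by (simp add: m_assoc inv_mult_group)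
    qed
  next
    fix x assume x: "x \<in> K"
    have xc: "x \<in> carrier G" using x unfolding K_def by auto
    show "inv x \<in> K" using x xc unfolding K_def by auto
  qed
  have KA: "K \<subseteq> A"
  proof
    fix g assume g: "g \<in> K"
    hence "g \<otimes> \<one> \<in> A" using oneA unfolding K_def by auto
    thus "g \<in> A" using g unfolding K_def by auto
  qed
  have oK: "openin T K"
  proof (subst openin_subopen, intro ballI)
    fix g assume g: "g \<in> K"
    have gc: "g \<in> carrier G" using g unfolding K_def by auto
    let ?N = "{y \<in> carrier G. inv g \<otimes> y \<in> V}"
    have "openin T ?N" by (rule open_ltrans[OF inv_closed[OF gc] oV])
    moreover have "g \<in> ?N" using gc oneV by simp
    moreover have "?N \<subseteq> K"
    proof
      fix y assume y: "y \<in> ?N"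
      have yc: "y \<in> carrier G" using y by simp
      define v where "v = inv g \<otimes> y"
      have vV: "v \<in> V" using y v_def by simp
      have vc: "v \<in> carrier G" using gc yc v_def by simp
      have yv: "y = g \<otimes> v" using gc yc unfolding v_def by (simp add: m_assoc[symmetric])
      show "y \<in> K" unfolding K_def
      proof (intro CollectI conjI ballI yc)
        fix a assume a: "a \<in> A"
        have ac: "a \<in> carrier G" using a Ac by auto
        have "v \<otimes> a \<in> A" using O0A vV a unfolding V_def by auto
        hence "g \<otimes> (v \<otimes> a) \<in> A" using g unfolding K_def by auto
        thus "y \<otimes> a \<in> A" using yv gc vc ac by (simp add: m_assoc)
        have "inv g \<otimes> a \<in> A" using g a unfolding K_def by auto
        hence "inv v \<otimes> (inv g \<otimes> a) \<in> A" using O0A vV unfolding V_def by auto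
        thus "inv y \<otimes> a \<in> A" using yv gc vc ac by (simp add: m_assoc inv_mult_group)
      qed
    qed
    ultimately show "\<exists>T'. openin T T' \<and> g \<in> T' \<and> T' \<subseteq> K" by blast
  qed
  have "closedin T K" by (rule open_subgroup_closed[OF sK oK])
  hence "compactin T K" using closed_compactin[OF cA KA] by simp
  thus ?thesis using sK oK KA AW unfolding compact_open_subgroup_def by blast
qed

end

lemma sum_bound_prod:
  fixes c :: "nat \<Rightarrow> complex"
  shows "cmod (\<Sum>i<n. c i * d i) \<le> (\<Sum>i<n. cmod (c i)) * (\<Sum>i<n. cmod (d i))"
proof -
  have "cmod (\<Sum>i<n. c i * d i) \<le> (\<Sum>i<n. cmod (c i) * cmod (d i))"
    by (rule order_trans[OF norm_sum]) (simp add: norm_mult)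
  also have "\<dots> \<le> (\<Sum>i<n. cmod (c i) * (\<Sum>j<n. cmod (d j)))"
    by (intro sum_mono mult_left_mono) (auto intro: member_le_sum)
  also have "\<dots> = (\<Sum>i<n. cmod (c i)) * (\<Sum>i<n. cmod (d i))"
    by (simp add: sum_distrib_right)
  finally show ?thesis .
qed

lemma LA:
  fixes \<phi> :: "nat \<Rightarrow> 'a \<Rightarrow> complex" and H :: "'a set"
  shows "\<exists>P C. finite P \<and> P \<subseteq> H \<and> C \<ge> 0 \<and>
    (\<forall>a. \<exists>a'. (\<forall>h\<in>H. (\<Sum>i<n. a' i * \<phi> i h) = (\<Sum>i<n. a i * \<phi> i h)) \<and>
       (\<Sum>i<n. cmod (a' i)) \<le> C * (\<Sum>p\<in>P. cmod (\<Sum>i<n. a i * \<phi> i p))) \<and>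
    (\<forall>t. \<exists>a. \<forall>p\<in>P. (\<Sum>i<n. a i * \<phi> i p) = t p)"
proof (induction n)
  case 0
  show ?case by (rule exI[of _ "{}"], rule exI[of _ 0]) auto
next
  case (Suc n)
  then obtain P C where P: "finite P" "P \<subseteq> H" and C: "C \<ge> 0"
    and rep: "\<And>a. \<exists>a'. (\<forall>h\<in>H. (\<Sum>i<n. a' i * \<phi> i h) = (\<Sum>i<n. a i * \<phi> i h)) \<and>
       (\<Sum>i<n. cmod (a' i)) \<le> C * (\<Sum>p\<in>P. cmod (\<Sum>i<n. a i * \<phi> i p))"
    and sur: "\<And>t. \<exists>a. \<forall>p\<in>P. (\<Sum>i<n. a i * \<phi> i p) = t p"
    by blast
  show ?case
  proof (cases "\<exists>b. \<forall>h\<in>H. \<phi> n h = (\<Sum>i<n. b i * \<phi> i h)")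
    case True
    then obtain b where b: "\<And>h. h \<in> H \<Longrightarrow> \<phi> n h = (\<Sum>i<n. b i * \<phi> i h)" by blast
    have A: "\<exists>a'. (\<forall>h\<in>H. (\<Sum>i<Suc n. a' i * \<phi> i h) = (\<Sum>i<Suc n. a i * \<phi> i h)) \<and>
       (\<Sum>i<Suc n. cmod (a' i)) \<le> C * (\<Sum>p\<in>P. cmod (\<Sum>i<Suc n. a i * \<phi> i p))" for a
    proof -
      define c where "c i = a i + a n * b i" for i
      have wc: "(\<Sum>i<Suc n. a i * \<phi> i h) = (\<Sum>i<n. c i * \<phi> i h)" if h: "h \<in> H" for h
        using b[OF h] by (simp add: c_def algebra_simps sum.distrib sum_distrib_left)
      obtain c' where c'1: "\<forall>h\<in>H. (\<Sum>i<n. c' i * \<phi> i h) = (\<Sum>i<n. c i * \<phi> i h)"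
        and c'2: "(\<Sum>i<n. cmod (c' i)) \<le> C * (\<Sum>p\<in>P. cmod (\<Sum>i<n. c i * \<phi> i p))"
        using rep[of c] by blast
      define a' where "a' = c'(n := 0)"
      have e1: "(\<Sum>i<n. a' i * \<phi> i h) = (\<Sum>i<n. c' i * \<phi> i h)" for h
        by (rule sum.cong) (auto simp: a'_def)
      have e2: "(\<Sum>i<n. cmod (a' i)) = (\<Sum>i<n. cmod (c' i))"
        by (rule sum.cong) (auto simp: a'_def)
      have "(\<Sum>p\<in>P. cmod (\<Sum>i<n. c i * \<phi> i p)) = (\<Sum>p\<in>P. cmod (\<Sum>i<Suc n. a i * \<phi> i p))"
        by (rule sum.cong) (use P wc in auto)
      then show ?thesis
        using c'1 c'2 wc e1 e2 by (intro exI[of _ a']) (auto simp: a'_def)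
    qed
    have S: "\<exists>a. \<forall>p\<in>P. (\<Sum>i<Suc n. a i * \<phi> i p) = t p" for t
    proof -
      obtain a where a: "\<forall>p\<in>P. (\<Sum>i<n. a i * \<phi> i p) = t p" using sur by blast
      have e1: "(\<Sum>i<n. (a(n:=0)) i * \<phi> i h) = (\<Sum>i<n. a i * \<phi> i h)" for h
        by (rule sum.cong) auto
      show ?thesis using a e1 by (intro exI[of _ "a(n:=0)"]) simp
    qed
    show ?thesis using P C A S by blast
  next
    case False
    obtain b where b: "\<forall>p\<in>P. (\<Sum>i<n. b i * \<phi> i p) = \<phi> n p" using sur by blast
    obtain q where q: "q \<in> H" and qne: "\<phi> n q \<noteq> (\<Sum>i<n. b i * \<phi> i q)" using False by blast
    define \<delta> where "\<delta> = \<phi> n q - (\<Sum>i<n. b i * \<phi> i q)"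
    have d0: "\<delta> \<noteq> 0" using qne by (simp add: \<delta>_def)
    have qP: "q \<notin> P" using b qne by auto
    define \<Phi> where "\<Phi> = (\<Sum>i<n. cmod (\<phi> i q))"
    define B where "B = (\<Sum>i<n. cmod (b i))"
    define C' where "C' = C + (B + 1) * (1 + C * \<Phi>) / cmod \<delta>"
    have \<Phi>0: "\<Phi> \<ge> 0" and B0: "B \<ge> 0" by (auto simp: \<Phi>_def B_def intro: sum_nonneg)
    have C'0: "C' \<ge> 0" using C \<Phi>0 B0 by (simp add: C'_def)
    define P' where "P' = insert q P"
    have A: "\<exists>a'. (\<forall>h\<in>H. (\<Sum>i<Suc n. a' i * \<phi> i h) = (\<Sum>i<Suc n. a i * \<phi> i h)) \<and>
       (\<Sum>i<Suc n. cmod (a' i)) \<le> C' * (\<Sum>p\<in>P'. cmod (\<Sum>i<Suc n. a i * \<phi> i p))" for a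
    proof -
      define \<alpha> where "\<alpha> = a n"
      define c where "c i = a i + \<alpha> * b i" for i
      define w where "w h = (\<Sum>i<Suc n. a i * \<phi> i h)" for h
      define u where "u h = (\<Sum>i<n. c i * \<phi> i h)" for h
      have wu: "w h = u h + \<alpha> * (\<phi> n h - (\<Sum>i<n. b i * \<phi> i h))" for h
        by (simp add: w_def u_def c_def \<alpha>_def algebra_simps sum.distrib sum_distrib_left)
      have wuP: "w p = u p" if "p \<in> P" for p using wu[of p] b that by simp
      have wuq: "w q = u q + \<alpha> * \<delta>" using wu[of q] by (simp add: \<delta>_def)
      define S where "S = (\<Sum>p\<in>P. cmod (w p))"
      have S0: "S \<ge> 0" by (simp add: S_def sum_nonneg)
      obtain c' where c'1: "\<forall>h\<in>H. (\<Sum>i<n. c' i * \<phi> i h) = u h"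
        and c'2: "(\<Sum>i<n. cmod (c' i)) \<le> C * S"
      proof -
        obtain c' where "\<forall>h\<in>H. (\<Sum>i<n. c' i * \<phi> i h) = (\<Sum>i<n. c i * \<phi> i h)"
          and "(\<Sum>i<n. cmod (c' i)) \<le> C * (\<Sum>p\<in>P. cmod (\<Sum>i<n. c i * \<phi> i p))"
          using rep[of c] by blast
        moreover have "(\<Sum>p\<in>P. cmod (\<Sum>i<n. c i * \<phi> i p)) = S"
          unfolding S_def by (rule sum.cong) (auto simp: wuP u_def)
        ultimately show ?thesis using that by (simp add: u_def)
      qed
      have uq: "cmod (u q) \<le> C * \<Phi> * S"
      proof -
        have "cmod (u q) = cmod (\<Sum>i<n. c' i * \<phi> i q)" using c'1 q by simp
        also have "\<dots> \<le> (\<Sum>i<n. cmod (c' i)) * \<Phi>" unfolding \<Phi>_def by (rule sum_bound_prod)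
        also have "\<dots> \<le> C * S * \<Phi>" using c'2 \<Phi>0 by (rule mult_right_mono)
        finally show ?thesis by (simp add: algebra_simps)
      qed
      have al: "cmod \<alpha> \<le> (cmod (w q) + C * \<Phi> * S) / cmod \<delta>"
      proof -
        have "\<alpha> = (w q - u q) / \<delta>" using wuq d0 by (simp add: field_simps)
        hence "cmod \<alpha> = cmod (w q - u q) / cmod \<delta>" by (simp add: norm_divide)
        also have "\<dots> \<le> (cmod (w q) + C * \<Phi> * S) / cmod \<delta>"
          using uq norm_triangle_ineq4[of "w q" "u q"] by (intro divide_right_mono) auto
        finally show ?thesis .
      qed
      define a' where "a' i = (if i < n then c' i - \<alpha> * b i else \<alpha>)" for i
      have r1: "(\<Sum>i<Suc n. a' i * \<phi> i h) = w h" if h: "h \<in> H" for h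
      proof -
        have "(\<Sum>i<Suc n. a' i * \<phi> i h) = (\<Sum>i<n. (c' i - \<alpha> * b i) * \<phi> i h) + \<alpha> * \<phi> n h"
          by (simp add: a'_def)
        also have "\<dots> = (\<Sum>i<n. c' i * \<phi> i h) - \<alpha> * (\<Sum>i<n. b i * \<phi> i h) + \<alpha> * \<phi> n h"
          by (simp add: algebra_simps sum_subtractf sum_distrib_left)
        also have "\<dots> = w h" using c'1 h wu[of h] by (simp add: algebra_simps)
        finally show ?thesis .
      qed
      have r2: "(\<Sum>i<Suc n. cmod (a' i)) \<le> C * S + cmod \<alpha> * (B + 1)"
      proof -
        have "(\<Sum>i<Suc n. cmod (a' i)) = (\<Sum>i<n. cmod (c' i - \<alpha> * b i)) + cmod \<alpha>"
          by (simp add: a'_def)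
        also have "\<dots> \<le> (\<Sum>i<n. cmod (c' i) + cmod \<alpha> * cmod (b i)) + cmod \<alpha>"
          by (intro add_right_mono sum_mono) (metis norm_mult norm_triangle_ineq4)
        also have "\<dots> = (\<Sum>i<n. cmod (c' i)) + cmod \<alpha> * B + cmod \<alpha>"
          by (simp add: B_def sum.distrib sum_distrib_left)
        also have "\<dots> \<le> C * S + cmod \<alpha> * B + cmod \<alpha>" using c'2 by simp
        finally show ?thesis by (simp add: algebra_simps)
      qed
      have SP': "(\<Sum>p\<in>P'. cmod (w p)) = cmod (w q) + S"
        unfolding P'_def S_def using P qP by simp
      have "C * S + cmod \<alpha> * (B + 1) \<le> C * S + (cmod (w q) + C * \<Phi> * S) / cmod \<delta> * (B + 1)"
        by (intro add_left_mono mult_right_mono al) (use B0 in simp)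
      also have "\<dots> = C * S + (B + 1) / cmod \<delta> * cmod (w q) + (B + 1) * C * \<Phi> / cmod \<delta> * S"
        using d0 by (simp add: field_simps)
      also have "\<dots> \<le> C' * cmod (w q) + C' * S"
      proof -
        have k1: "(B + 1) / cmod \<delta> \<le> C'" using C \<Phi>0 B0 d0
          unfolding C'_def by (simp add: field_simps mult_nonneg_nonneg)
        have "(B + 1) * C * \<Phi> \<le> (B + 1) * (1 + C * \<Phi>)" using B0 by (simp add: algebra_simps)
        hence "(B + 1) * C * \<Phi> / cmod \<delta> \<le> (B + 1) * (1 + C * \<Phi>) / cmod \<delta>"
          by (rule divide_right_mono) simp
        hence k2: "C + (B + 1) * C * \<Phi> / cmod \<delta> \<le> C'"
          unfolding C'_def by simp
        have "(B + 1) / cmod \<delta> * cmod (w q) \<le> C' * cmod (w q)"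
          using mult_right_mono[OF k1 norm_ge_zero[of "w q"]] by simp
        moreover have "C * S + (B + 1) * C * \<Phi> / cmod \<delta> * S \<le> C' * S"
          using k2 S0 mult_right_mono[OF k2 S0] by (simp add: algebra_simps)
        ultimately show ?thesis by simp
      qed
      finally have "(\<Sum>i<Suc n. cmod (a' i)) \<le> C' * (\<Sum>p\<in>P'. cmod (w p))"
        using r2 SP' by (simp add: algebra_simps)
      thus ?thesis using r1 by (intro exI[of _ a']) (simp add: w_def)
    qed
    have S: "\<exists>a. \<forall>p\<in>P'. (\<Sum>i<Suc n. a i * \<phi> i p) = t p" for t
    proof -
      obtain a0 where a0: "\<forall>p\<in>P. (\<Sum>i<n. a0 i * \<phi> i p) = t p" using sur by blast
      define \<alpha> where "\<alpha> = (t q - (\<Sum>i<n. a0 i * \<phi> i q)) / \<delta>"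
      define a where "a i = (if i < n then a0 i - \<alpha> * b i else \<alpha>)" for i
      have ea: "(\<Sum>i<Suc n. a i * \<phi> i h) = (\<Sum>i<n. a0 i * \<phi> i h) + \<alpha> * (\<phi> n h - (\<Sum>i<n. b i * \<phi> i h))" for h
        by (simp add: a_def algebra_simps sum_subtractf sum_distrib_left)
      have "(\<Sum>i<Suc n. a i * \<phi> i p) = t p" if p: "p \<in> P'" for p
      proof (cases "p = q")
        case True
        then show ?thesis using ea[of q] d0 by (simp add: \<alpha>_def \<delta>_def[symmetric])
      next
        case False
        hence "p \<in> P" using p P'_def by simp
        then show ?thesis using ea[of p] a0 b by simp
      qed
      thus ?thesis by blast
    qed
    show ?thesis using P q C'0 A S unfolding P'_def by (intro exI[of _ P'] exI[of _ C']) (auto simp: P'_def)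
  qed
qed

context tdlc
begin

lemma invariance:
  fixes n :: nat and \<phi> fs :: "nat \<Rightarrow> 'a \<Rightarrow> complex" and f :: "'a \<Rightarrow> complex"
  assumes fC: "f \<in> Cc T" and Hc: "compact_open_subgroup G T H"
    and fsphi: "\<forall>i<n. fs i \<in> Cc T \<and> continuous_map (subtopology T H) euclidean (\<phi> i)"
    and dec: "\<forall>x\<in>carrier G. \<forall>h\<in>H. f (x \<otimes> h) = (\<Sum>i<n. fs i x * \<phi> i h)"
  shows "\<exists>K. compact_open_subgroup G T K \<and> (\<forall>x\<in>carrier G. \<forall>k\<in>K. f (x \<otimes> k) = f x)"
proof -
  have sH: "subgroup H G" and oH: "openin T H" using Hc by (auto simp: compact_open_subgroup_def)
  have Hcar: "H \<subseteq> carrier G" using subgroup.subset[OF sH] .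
  obtain P C where P: "finite P" "P \<subseteq> H" and C: "C \<ge> 0"
    and rep: "\<And>a. \<exists>a'. (\<forall>h\<in>H. (\<Sum>i<n. a' i * \<phi> i h) = (\<Sum>i<n. a i * \<phi> i h)) \<and>
       (\<Sum>i<n. cmod (a' i)) \<le> C * (\<Sum>p\<in>P. cmod (\<Sum>i<n. a i * \<phi> i p))"
    using LA[where \<phi>=\<phi> and H=H and n=n] by blast
  define \<delta> :: real where "\<delta> = 1 / (4 * (C + 1))"
  have \<delta>0: "\<delta> > 0" using C by (simp add: \<delta>_def)
  have C\<delta>: "C * \<delta> \<le> 1/4" using C by (simp add: \<delta>_def field_simps)
  define D where "D k = (\<Sum>i<n. \<Sum>p\<in>P. cmod (\<phi> i (k \<otimes> p) - \<phi> i p))" for k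
  define U where "U = {k \<in> H. D k < \<delta>}"
  have tH: "topspace (subtopology T H) = H" using Hcar top by auto
  have cD: "continuous_map (subtopology T H) euclideanreal D"
  proof -
    have "continuous_map (subtopology T H) euclidean (\<lambda>k. \<phi> i (k \<otimes> p))" if i: "i < n" and p: "p \<in> P" for i p
    proof -
      have pc: "p \<in> H" using p P by auto
      have "continuous_map (subtopology T H) (subtopology T H) (\<lambda>k. k \<otimes> p)"
        unfolding continuous_map_in_subtopology
        using continuous_map_from_subtopology[OF rmult_cont[of p]] pc Hcar tH
          subgroup.m_closed[OF sH] by auto
      from continuous_map_compose[OF this] fsphi i show ?thesis by (auto simp: o_def)
    qed
    thus ?thesis unfolding D_def using fsphi P
      by (intro continuous_map_sum continuous_map_norm continuous_map_diff) auto
  qed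
  have oU: "openin T U"
  proof -
    have "openin (subtopology T H) {k \<in> topspace (subtopology T H). D k \<in> {..<\<delta>}}"
      by (rule openin_continuous_map_preimage[OF cD]) simp
    moreover have "{k \<in> topspace (subtopology T H). D k \<in> {..<\<delta>}} = U" unfolding U_def using tH by auto
    ultimately have "openin (subtopology T H) U" by simp
    thus ?thesis using openin_open_subtopology[OF oH] by blast
  qed
  have "D \<one> = 0" unfolding D_def
    by (intro sum.neutral ballI) (use P Hcar in auto)
  hence oneU: "\<one> \<in> U" unfolding U_def using \<delta>0 subgroup.one_closed[OF sH] by auto
  obtain K where Kc: "compact_open_subgroup G T K" and KU: "K \<subseteq> U" using vD[OF oU oneU] by blast
  have sK: "subgroup K G" using Kc by (simp add: compact_open_subgroup_def)
  define inV where "inV w \<longleftrightarrow> (\<exists>a. \<forall>h\<in>H. w h = (\<Sum>i<n. a i * \<phi> i h))" for w :: "'a \<Rightarrow> complex"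
  define nP where "nP w = (\<Sum>p\<in>P. cmod (w p))" for w :: "'a \<Rightarrow> complex"
  have nP0: "nP w \<ge> 0" for w unfolding nP_def by (simp add: sum_nonneg)
  have E: "nP (\<lambda>h. w (k \<otimes> h) - w h) \<le> nP w / 4" if w: "inV w" and k: "k \<in> U" for w k
  proof -
    obtain a where a: "\<forall>h\<in>H. w h = (\<Sum>i<n. a i * \<phi> i h)" using w unfolding inV_def by blast
    obtain a' where a'1: "\<forall>h\<in>H. (\<Sum>i<n. a' i * \<phi> i h) = (\<Sum>i<n. a i * \<phi> i h)"
      and a'2: "(\<Sum>i<n. cmod (a' i)) \<le> C * (\<Sum>p\<in>P. cmod (\<Sum>i<n. a i * \<phi> i p))"
      using rep by blast
    have kH: "k \<in> H" using k U_def by auto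
    have a'3: "(\<Sum>i<n. cmod (a' i)) \<le> C * nP w"
    proof -
      have "(\<Sum>p\<in>P. cmod (\<Sum>i<n. a i * \<phi> i p)) = nP w"
        unfolding nP_def by (rule sum.cong) (use a P in auto)
      thus ?thesis using a'2 by simp
    qed
    have pt: "cmod (w (k \<otimes> p) - w p) \<le> (\<Sum>i<n. cmod (a' i)) * (\<Sum>i<n. cmod (\<phi> i (k \<otimes> p) - \<phi> i p))"
      if p: "p \<in> P" for p
    proof -
      have pH: "p \<in> H" using p P by auto
      have kp: "k \<otimes> p \<in> H" using subgroup.m_closed[OF sH kH pH] .
      have "w (k \<otimes> p) - w p = (\<Sum>i<n. a' i * (\<phi> i (k \<otimes> p) - \<phi> i p))"
        using a kp pH a'1 by (simp add: algebra_simps sum_subtractf)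
      thus ?thesis using sum_bound_prod[of a' "\<lambda>i. \<phi> i (k \<otimes> p) - \<phi> i p" n] by simp
    qed
    have "nP (\<lambda>h. w (k \<otimes> h) - w h) \<le> (\<Sum>p\<in>P. (\<Sum>i<n. cmod (a' i)) * (\<Sum>i<n. cmod (\<phi> i (k \<otimes> p) - \<phi> i p)))"
      unfolding nP_def by (rule sum_mono) (rule pt)
    also have "\<dots> = (\<Sum>i<n. cmod (a' i)) * D k"
      unfolding D_def by (simp add: sum_distrib_left sum.swap[of _ P])
    also have "\<dots> \<le> C * nP w * \<delta>"
    proof -
      have "D k \<ge> 0" unfolding D_def by (simp add: sum_nonneg)
      moreover have "D k \<le> \<delta>" using k U_def by auto
      moreover have "(\<Sum>i<n. cmod (a' i)) \<ge> 0" by (simp add: sum_nonneg)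
      ultimately have "(\<Sum>i<n. cmod (a' i)) * D k \<le> (C * nP w) * \<delta>"
        using a'3 by (intro mult_mono) auto
      thus ?thesis by simp
    qed
    also have "\<dots> = (C * \<delta>) * nP w" by (simp add: algebra_simps)
    also have "\<dots> \<le> (1/4) * nP w" using C\<delta> nP0[of w] by (rule mult_right_mono)
    also have "\<dots> = nP w / 4" by simp
    finally show ?thesis .
  qed
  have Vsub: "inV (\<lambda>h. u h - v h)" if uv: "inV u" "inV v" for u v
  proof -
    obtain a b where a: "\<forall>h\<in>H. u h = (\<Sum>i<n. a i * \<phi> i h)" and b: "\<forall>h\<in>H. v h = (\<Sum>i<n. b i * \<phi> i h)"
      using uv unfolding inV_def by blast
    have "\<forall>h\<in>H. u h - v h = (\<Sum>i<n. (a i - b i) * \<phi> i h)"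
      using a b by (simp add: algebra_simps sum_subtractf)
    thus ?thesis unfolding inV_def by (intro exI[of _ "\<lambda>i. a i - b i"])
  qed
  define inW where "inW w \<longleftrightarrow> (\<forall>k\<in>H. inV (\<lambda>h. w (k \<otimes> h)))" for w :: "'a \<Rightarrow> complex"
  have Wv: "inV w" if wW: "inW w" for w
  proof -
    have "inV (\<lambda>h. w (\<one> \<otimes> h))" using wW subgroup.one_closed[OF sH] unfolding inW_def by blast
    then obtain a where a: "\<forall>h\<in>H. w (\<one> \<otimes> h) = (\<Sum>i<n. a i * \<phi> i h)" unfolding inV_def by blast
    have "\<forall>h\<in>H. w h = (\<Sum>i<n. a i * \<phi> i h)"
    proof
      fix h assume h: "h \<in> H"
      hence "\<one> \<otimes> h = h" using Hcar by auto
      thus "w h = (\<Sum>i<n. a i * \<phi> i h)" using a h by metis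
    qed
    thus ?thesis unfolding inV_def by blast
  qed
  have Z: "\<forall>h\<in>H. w h = 0" if w: "inV w" and n0: "nP w = 0" for w
  proof -
    obtain a where a: "\<forall>h\<in>H. w h = (\<Sum>i<n. a i * \<phi> i h)" using w unfolding inV_def by blast
    obtain a' where a'1: "\<forall>h\<in>H. (\<Sum>i<n. a' i * \<phi> i h) = (\<Sum>i<n. a i * \<phi> i h)"
      and a'2: "(\<Sum>i<n. cmod (a' i)) \<le> C * (\<Sum>p\<in>P. cmod (\<Sum>i<n. a i * \<phi> i p))"
      using rep by blast
    have "(\<Sum>p\<in>P. cmod (\<Sum>i<n. a i * \<phi> i p)) = nP w"
      unfolding nP_def by (rule sum.cong) (use a P in auto)
    hence "(\<Sum>i<n. cmod (a' i)) \<le> 0" using a'2 n0 by simp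
    moreover have "(\<Sum>i<n. cmod (a' i)) \<ge> 0" by (simp add: sum_nonneg)
    ultimately have "(\<Sum>i<n. cmod (a' i)) = 0" by linarith
    hence "\<forall>i\<in>{..<n}. cmod (a' i) = 0" by (subst (asm) sum_nonneg_eq_0_iff) auto
    hence "\<forall>i<n. a' i = 0" by simp
    thus ?thesis using a a'1 by simp
  qed
  have sq: "\<forall>h\<in>H. w (k \<otimes> h) = w h" if w: "inW w" and k: "k \<in> K" for w k
  proof -
    have kc: "k \<in> carrier G" using k subgroup.subset[OF sK] by auto
    define kk where "kk j = k [^] ((2::nat) ^ j)" for j
    have powK: "k [^] (m::nat) \<in> K" for m
    proof (induction m)
      case 0 then show ?case using subgroup.one_closed[OF sK] by simp
    next
      case (Suc m) then show ?case using subgroup.m_closed[OF sK] k by simp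
    qed
    have kkK: "kk j \<in> K" for j unfolding kk_def by (rule powK)
    have kkc: "kk j \<in> carrier G" for j using kkK subgroup.subset[OF sK] by auto
    have kkH: "kk j \<in> H" for j using kkK KU U_def by auto
    have kkS: "kk (Suc j) = kk j \<otimes> kk j" for j
      unfolding kk_def using nat_pow_mult[OF kc, of "2^j" "2^j"] by (simp add: mult_2)
    define d where "d j = nP (\<lambda>h. w (kk j \<otimes> h) - w h)" for j
    have wV: "inV w" using Wv[OF w] .
    have bound: "d j \<le> nP w / 4" for j unfolding d_def using E[OF wV] kkK KU by blast
    have grow: "d (Suc j) \<ge> 7/4 * d j" for j
    proof -
      define u where "u h = w (kk j \<otimes> h) - w h" for h
      have uV: "inV u" unfolding u_def using Vsub w wV kkH unfolding inW_def by blast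
      have Eu: "nP (\<lambda>h. u (kk j \<otimes> h) - u h) \<le> d j / 4"
        using E[OF uV, of "kk j"] kkK KU unfolding d_def u_def by auto
      have pt: "cmod (w (kk (Suc j) \<otimes> p) - w p) \<ge> 2 * cmod (u p) - cmod (u (kk j \<otimes> p) - u p)"
        if p: "p \<in> P" for p
      proof -
        have pc: "p \<in> carrier G" using p P Hcar by auto
        have "w (kk (Suc j) \<otimes> p) - w p = 2 * u p + (u (kk j \<otimes> p) - u p)"
          unfolding kkS u_def using kkc pc by (simp add: m_assoc)
        moreover have "cmod (2 * u p) \<le> cmod (2 * u p + (u (kk j \<otimes> p) - u p)) + cmod (u (kk j \<otimes> p) - u p)"
          using norm_triangle_ineq4[of "2 * u p + (u (kk j \<otimes> p) - u p)" "u (kk j \<otimes> p) - u p"] by simp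
        ultimately show ?thesis by (simp add: norm_mult)
      qed
      have "d (Suc j) \<ge> (\<Sum>p\<in>P. 2 * cmod (u p) - cmod (u (kk j \<otimes> p) - u p))"
        unfolding d_def nP_def by (rule sum_mono) (rule pt)
      also have "(\<Sum>p\<in>P. 2 * cmod (u p) - cmod (u (kk j \<otimes> p) - u p)) = 2 * d j - nP (\<lambda>h. u (kk j \<otimes> h) - u h)"
        unfolding d_def nP_def u_def by (simp add: sum_subtractf sum_distrib_left)
      finally show ?thesis using Eu by simp
    qed
    have ind: "d j \<ge> (7/4) ^ j * d 0" for j
    proof (induction j)
      case 0 then show ?case by simp
    next
      case (Suc j)
      have "(7/4::real) ^ Suc j * d 0 = 7/4 * ((7/4) ^ j * d 0)" by simp
      also have "\<dots> \<le> 7/4 * d j" using Suc by (simp add: mult.commute)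
      also have "\<dots> \<le> d (Suc j)" using grow by simp
      finally show ?case .
    qed
    have d00: "d 0 = 0"
    proof (rule ccontr)
      assume "d 0 \<noteq> 0"
      hence dpos: "d 0 > 0" using nP0[of "\<lambda>h. w (kk 0 \<otimes> h) - w h"] unfolding d_def by linarith
      obtain j where j: "(nP w / 4) / d 0 < (7/4::real) ^ j" using real_arch_pow[of "7/4"] by auto
      hence "nP w / 4 < (7/4) ^ j * d 0" using dpos by (simp add: field_simps)
      thus False using ind[of j] bound[of j] by simp
    qed
    have "kk 0 = k" unfolding kk_def using kc by simp
    hence "nP (\<lambda>h. w (k \<otimes> h) - w h) = 0" using d00 unfolding d_def by simp
    moreover have "inV (\<lambda>h. w (k \<otimes> h) - w h)"
      using Vsub w wV k KU U_def unfolding inW_def by blast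
    ultimately show ?thesis using Z by fastforce
  qed
  have "\<forall>x\<in>carrier G. \<forall>k\<in>K. f (x \<otimes> k) = f x"
  proof (intro ballI)
    fix x k assume x: "x \<in> carrier G" and k: "k \<in> K"
    define w where "w h = f (x \<otimes> h)" for h
    have "inW w" unfolding inW_def inV_def
    proof
      fix k0 assume k0: "k0 \<in> H"
      have "\<forall>h\<in>H. w (k0 \<otimes> h) = (\<Sum>i<n. fs i (x \<otimes> k0) * \<phi> i h)"
      proof
        fix h assume h: "h \<in> H"
        have kc0: "k0 \<in> carrier G" "h \<in> carrier G" using k0 h Hcar by auto
        hence "x \<otimes> (k0 \<otimes> h) = (x \<otimes> k0) \<otimes> h" using x by (simp add: m_assoc)
        moreover have "x \<otimes> k0 \<in> carrier G" using x kc0 by simp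
        ultimately show "w (k0 \<otimes> h) = (\<Sum>i<n. fs i (x \<otimes> k0) * \<phi> i h)"
          unfolding w_def using dec h by simp
      qed
      thus "\<exists>a. \<forall>h\<in>H. w (k0 \<otimes> h) = (\<Sum>i<n. a i * \<phi> i h)"
        by (intro exI[of _ "\<lambda>i. fs i (x \<otimes> k0)"])
    qed
    hence "w (k \<otimes> \<one>) = w \<one>" using sq[of w k] k subgroup.one_closed[OF sH] by blast
    moreover have "k \<in> carrier G" using k subgroup.subset[OF sK] by auto
    ultimately show "f (x \<otimes> k) = f x" unfolding w_def using x by simp
  qed
  thus ?thesis using Kc by blast
qed

end

lemma indicator_clopen_cont:
  assumes o: "openin XX A" and c: "closedin XX A"
  shows "continuous_map XX euclidean (indicator A :: 'a \<Rightarrow> complex)"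
  unfolding continuous_map
proof (intro conjI allI impI)
  show "indicator A ` topspace XX \<subseteq> topspace euclidean" by simp
  fix U :: "complex set" assume "openin euclidean U"
  have oc: "openin XX (topspace XX - A)" using c by (simp add: openin_diff)
  have Asub: "A \<subseteq> topspace XX" using o openin_subset by blast
  have eq: "{x \<in> topspace XX. indicator A x \<in> U} =
      (if (1::complex) \<in> U then A else {}) \<union> (if (0::complex) \<in> U then topspace XX - A else {})"
    using Asub by (auto simp: indicator_def)
  show "openin XX {x \<in> topspace XX. indicator A x \<in> U}"
    unfolding eq using o oc by auto
qed

lemma clopen_cases_cont:
  fixes a b :: complex
  assumes o: "openin XX A" and c: "closedin XX A"
  shows "continuous_map XX euclidean (\<lambda>x. if x \<in> A then a else b)"
  unfolding continuous_map
proof (intro conjI allI impI)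
  show "(\<lambda>x. if x \<in> A then a else b) ` topspace XX \<subseteq> topspace euclidean" by simp
  fix U :: "complex set" assume "openin euclidean U"
  have oc: "openin XX (topspace XX - A)" using c by (simp add: openin_diff)
  have Asub: "A \<subseteq> topspace XX" using o openin_subset by blast
  have eq: "{x \<in> topspace XX. (if x \<in> A then a else b) \<in> U} =
      (if a \<in> U then A else {}) \<union> (if b \<in> U then topspace XX - A else {})"
    using Asub by auto
  show "openin XX {x \<in> topspace XX. (if x \<in> A then a else b) \<in> U}"
    unfolding eq using o oc by auto
qed

context tgrp
begin

lemma coset_char:
  assumes x: "x \<in> carrier G" and K: "subgroup K G"
  shows "x <# K = {y \<in> carrier G. inv x \<otimes> y \<in> K}"
proof
  show "x <# K \<subseteq> {y \<in> carrier G. inv x \<otimes> y \<in> K}"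
  proof
    fix y assume "y \<in> x <# K"
    then obtain k where k: "k \<in> K" and y: "y = x \<otimes> k" unfolding l_coset_def by auto
    have kc: "k \<in> carrier G" using k subgroup.subset[OF K] by auto
    have "inv x \<otimes> y = k" using x kc y by (simp add: m_assoc[symmetric])
    thus "y \<in> {y \<in> carrier G. inv x \<otimes> y \<in> K}" using k kc x y by simp
  qed
  show "{y \<in> carrier G. inv x \<otimes> y \<in> K} \<subseteq> x <# K"
  proof
    fix y assume y: "y \<in> {y \<in> carrier G. inv x \<otimes> y \<in> K}"
    have "x \<otimes> (inv x \<otimes> y) = y" using x y by (simp add: m_assoc[symmetric])
    thus "y \<in> x <# K" using y unfolding l_coset_def by force
  qed
qed

lemma coset_image: "x <# K = (\<lambda>h. x \<otimes> h) ` K"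
  unfolding l_coset_def by auto

lemma coset_sub: "x \<in> carrier G \<Longrightarrow> subgroup K G \<Longrightarrow> x <# K \<subseteq> carrier G"
  using coset_char by auto

lemma coset_open:
  assumes x: "x \<in> carrier G" and K: "compact_open_subgroup G T K"
  shows "openin T (x <# K)"
  using K coset_char[OF x] open_ltrans[OF inv_closed[OF x]]
  by (simp add: compact_open_subgroup_def)

lemma coset_compact:
  assumes x: "x \<in> carrier G" and K: "compact_open_subgroup G T K"
  shows "compactin T (x <# K)"
  unfolding coset_image
  by (rule image_compactin[OF _ lmult_cont[OF x]]) (use K in \<open>simp add: compact_open_subgroup_def\<close>)

end

context tdlc
begin

lemma coset_closed:
  assumes x: "x \<in> carrier G" and K: "compact_open_subgroup G T K"
  shows "closedin T (x <# K)"
  using compactin_imp_closedin[OF haus coset_compact[OF x K]] .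

lemma inv_smooth:
  fixes f :: "'a \<Rightarrow> complex"
  assumes fC: "f \<in> Cc T" and Kc: "compact_open_subgroup G T K"
    and inv: "\<forall>x\<in>carrier G. \<forall>k\<in>K. f (x \<otimes> k) = f x"
  shows "f \<in> smooth_functions G T"
proof -
  have sK: "subgroup K G" using Kc by (simp add: compact_open_subgroup_def)
  define S where "S = T closure_of {x \<in> topspace T. f x \<noteq> 0}"
  have cS: "compactin T S" using fC by (simp add: Cc_def S_def)
  have f0: "\<And>x. x \<notin> topspace T \<Longrightarrow> f x = 0" using fC by (simp add: Cc_def)
  have Sc: "S \<subseteq> carrier G" using cS compactin_subset_topspace top by blast
  have xin: "x \<in> x <# K" if "x \<in> carrier G" for x
  proof -
    have "x \<otimes> \<one> = x" using that by simp
    thus ?thesis unfolding l_coset_def using subgroup.one_closed[OF sK] by force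
  qed
  have "\<exists>F'. finite F' \<and> F' \<subseteq> (\<lambda>x. x <# K) ` S \<and> S \<subseteq> \<Union>F'"
  proof -
    have "\<forall>U\<in>(\<lambda>x. x <# K) ` S. openin T U" using coset_open[OF _ Kc] Sc by auto
    moreover have "S \<subseteq> \<Union>((\<lambda>x. x <# K) ` S)" using xin Sc by blast
    ultimately show ?thesis using cS unfolding compactin_def by blast
  qed
  then obtain F' where "finite F'" "F' \<subseteq> (\<lambda>x. x <# K) ` S" "S \<subseteq> \<Union>F'" by blast
  then obtain F where F: "finite F" "F \<subseteq> S" and SF: "S \<subseteq> \<Union>((\<lambda>x. x <# K) ` F)"
    by (metis finite_subset_image)
  define Cs where "Cs = (\<lambda>x. x <# K) ` F"
  have fCs: "finite Cs" using F by (simp add: Cs_def)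
  define rep where "rep C = (SOME x. x \<in> F \<and> C = x <# K)" for C
  have rep: "rep C \<in> F \<and> C = rep C <# K" if "C \<in> Cs" for C
  proof -
    have "\<exists>x. x \<in> F \<and> C = x <# K" using that by (auto simp: Cs_def)
    thus ?thesis unfolding rep_def by (rule someI_ex)
  qed
  have repc: "rep C \<in> carrier G" if "C \<in> Cs" for C using rep[OF that] F Sc by auto
  obtain e where e: "bij_betw e {0..<card Cs} Cs" using ex_bij_betw_nat_finite[OF fCs] by blast
  define m where "m = card Cs"
  define xs where "xs i = rep (e i)" for i
  define c where "c i = f (xs i)" for i
  have eCs: "e i \<in> Cs" if "i < m" for i using bij_betw_apply[OF e] that m_def by auto
  have same: "C = C0" if "C \<in> Cs" "C0 \<in> Cs" "g \<in> C" "g \<in> C0" for C C0 g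
  proof -
    have e1: "C = rep C <# K" and e2: "C0 = rep C0 <# K" using rep that by auto
    have "g \<in> rep C <# K" using e1 that by simp
    hence "rep C <# K = g <# K" by (rule l_repr_independence[OF _ repc[OF that(1)] sK])
    moreover have "g \<in> rep C0 <# K" using e2 that by simp
    hence "rep C0 <# K = g <# K" by (rule l_repr_independence[OF _ repc[OF that(2)] sK])
    ultimately show ?thesis using e1 e2 by simp
  qed
  have eq: "f g = (\<Sum>i<m. c i * indicator (xs i <# K) g)" for g
  proof -
    have "(\<Sum>i<m. c i * indicator (xs i <# K) g) = (\<Sum>i\<in>{0..<card Cs}. (\<lambda>C. f (rep C) * indicator (rep C <# K) g) (e i))"
      unfolding m_def c_def xs_def by (simp add: lessThan_atLeast0)
    also have "\<dots> = (\<Sum>C\<in>Cs. f (rep C) * indicator (rep C <# K) g)"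
      by (rule sum.reindex_bij_betw[OF e])
    also have "\<dots> = (\<Sum>C\<in>Cs. f (rep C) * indicator C g)"
      by (rule sum.cong) (use rep in auto)
    also have "\<dots> = f g"
    proof (cases "\<exists>C0\<in>Cs. g \<in> C0")
      case True
      then obtain C0 where C0: "C0 \<in> Cs" "g \<in> C0" by blast
      have "(\<Sum>C\<in>Cs. f (rep C) * indicator C g) = f (rep C0) * indicator C0 g + (\<Sum>C\<in>Cs - {C0}. f (rep C) * indicator C g)"
        using sum.remove[OF fCs C0(1)] by simp
      also have "(\<Sum>C\<in>Cs - {C0}. f (rep C) * indicator C g) = 0"
        using same[OF _ C0(1) _ C0(2)] by (intro sum.neutral) (auto simp: indicator_def)
      also have "f (rep C0) * indicator C0 g = f (rep C0)" using C0 by simp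
      also have "f (rep C0) = f g"
      proof -
        have "g \<in> rep C0 <# K" using rep[OF C0(1)] C0(2) by simp
        then obtain k where k: "k \<in> K" and g: "g = rep C0 \<otimes> k" unfolding l_coset_def by auto
        thus ?thesis using inv repc[OF C0(1)] by simp
      qed
      finally show ?thesis by simp
    next
      case False
      hence "(\<Sum>C\<in>Cs. f (rep C) * indicator C g) = 0"
        by (intro sum.neutral) (auto simp: indicator_def)
      moreover have "f g = 0"
      proof (rule ccontr)
        assume fg: "f g \<noteq> 0"
        hence "g \<in> topspace T" using f0 by blast
        hence "g \<in> S" unfolding S_def using fg closure_of_subset[of "{x \<in> topspace T. f x \<noteq> 0}" T] by auto
        hence "\<exists>C0\<in>Cs. g \<in> C0" using SF unfolding Cs_def by blast
        thus False using False by blast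
      qed
      ultimately show ?thesis by simp
    qed
    finally show ?thesis by simp
  qed
  have "\<forall>i<m. xs i \<in> carrier G \<and> compact_open_subgroup G T K"
    using eCs repc Kc unfolding xs_def by blast
  thus ?thesis unfolding smooth_functions_def using eq
    by (intro CollectI exI[of _ m] exI[of _ c] exI[of _ xs] exI[of _ "\<lambda>_. K"]) auto
qed

lemma smooth_P:
  assumes fs: "f \<in> smooth_functions G T"
  shows "f \<in> P_functions G T"
proof -
  obtain n :: nat and c :: "nat \<Rightarrow> complex" and x :: "nat \<Rightarrow> 'a" and H :: "nat \<Rightarrow> 'a set"
    where xH: "\<forall>i<n. x i \<in> carrier G \<and> compact_open_subgroup G T (H i)"
      and feq: "f = (\<lambda>g. \<Sum>i<n. c i * indicator (x i <# H i) g)"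
    using fs unfolding smooth_functions_def by blast
  have sH: "subgroup (H i) G" if "i < n" for i using xH that by (simp add: compact_open_subgroup_def)
  define UU where "UU = (\<Union>i<n. x i <# H i)"
  have Uncl: "closedin T UU" unfolding UU_def
    by (rule closedin_Union) (use xH coset_closed in auto)
  have Uncp: "compactin T UU" unfolding UU_def
    by (rule compactin_Union) (use xH coset_compact in auto)
  have f0: "f g = 0" if "g \<notin> UU" for g
    unfolding feq using that by (intro sum.neutral) (auto simp: UU_def)
  have cont: "continuous_map T euclidean f"
  proof -
    have "continuous_map T euclidean (\<lambda>g. c i * indicator (x i <# H i) g)" if i: "i < n" for i
    proof -
      have "(\<lambda>g. c i * indicator (x i <# H i) g) = (\<lambda>g. if g \<in> x i <# H i then c i else 0)"
        by (auto simp: fun_eq_iff indicator_def)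
      thus ?thesis using clopen_cases_cont[OF coset_open coset_closed] xH i by simp
    qed
    thus ?thesis unfolding feq by (intro continuous_map_sum) auto
  qed
  have "T closure_of {g \<in> topspace T. f g \<noteq> 0} \<subseteq> UU"
    by (rule closure_of_minimal[OF _ Uncl]) (use f0 in auto)
  hence supp: "compactin T (T closure_of {g \<in> topspace T. f g \<noteq> 0})"
    using closed_compactin[OF Uncp] by (simp add: closedin_closure_of)
  have out: "\<forall>g. g \<notin> topspace T \<longrightarrow> f g = 0"
  proof (intro allI impI f0)
    fix g assume "g \<notin> topspace T"
    thus "g \<notin> UU" unfolding UU_def using coset_sub xH sH top by blast
  qed
  have fC: "f \<in> Cc T" unfolding Cc_def using cont supp out by blast
  obtain K0 where K0: "compact_open_subgroup G T K0"
    using vD[OF openin_topspace] top by auto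
  define Hs where "Hs = insert K0 (H ` {..<n})"
  define H0 where "H0 = \<Inter>Hs"
  have Hsf: "finite Hs" "Hs \<noteq> {}" by (auto simp: Hs_def)
  have Hsc: "compact_open_subgroup G T S" if "S \<in> Hs" for S
    using that K0 xH by (auto simp: Hs_def)
  have H0c: "compact_open_subgroup G T H0"
  proof -
    have "subgroup H0 G" unfolding H0_def
      by (rule subgroups_Inter) (use Hsc Hsf in \<open>auto simp: compact_open_subgroup_def\<close>)
    moreover have "openin T H0" unfolding H0_def
      by (rule openin_Inter) (use Hsc Hsf in \<open>auto simp: compact_open_subgroup_def\<close>)
    moreover have "closedin T H0" unfolding H0_def
      by (rule closedin_Inter) (use Hsc Hsf compactin_imp_closedin[OF haus] in \<open>auto simp: compact_open_subgroup_def\<close>)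
    moreover have "H0 \<subseteq> K0" unfolding H0_def Hs_def by auto
    ultimately show ?thesis using closed_compactin[of T K0 H0] K0
      by (auto simp: compact_open_subgroup_def)
  qed
  have H0H: "H0 \<subseteq> H i" if "i < n" for i using that unfolding H0_def Hs_def by auto
  have H0car: "H0 \<subseteq> carrier G" using H0c subgroup.subset by (auto simp: compact_open_subgroup_def)
  have inv: "f (y \<otimes> h) = f y" if y: "y \<in> carrier G" and h: "h \<in> H0" for y h
  proof -
    have hc: "h \<in> carrier G" using h H0car by auto
    have "indicator (x i <# H i) (y \<otimes> h) = (indicator (x i <# H i) y :: complex)" if i: "i < n" for i
    proof -
      have xi: "x i \<in> carrier G" using xH i by auto
      have hi: "h \<in> H i" using H0H i h by auto
      have a: "inv x i \<otimes> (y \<otimes> h) = (inv x i \<otimes> y) \<otimes> h" using xi y hc by (simp add: m_assoc)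
      have "(inv x i \<otimes> y) \<otimes> h \<in> H i \<longleftrightarrow> inv x i \<otimes> y \<in> H i"
      proof
        assume "(inv x i \<otimes> y) \<otimes> h \<in> H i"
        hence "((inv x i \<otimes> y) \<otimes> h) \<otimes> inv h \<in> H i"
          using subgroup.m_closed[OF sH[OF i]] subgroup.m_inv_closed[OF sH[OF i] hi] by blast
        moreover have "((inv x i \<otimes> y) \<otimes> h) \<otimes> inv h = inv x i \<otimes> y"
          using xi y hc by (simp add: m_assoc)
        ultimately show "inv x i \<otimes> y \<in> H i" by simp
      next
        assume "inv x i \<otimes> y \<in> H i"
        thus "(inv x i \<otimes> y) \<otimes> h \<in> H i" using subgroup.m_closed[OF sH[OF i] _ hi] by blast
      qed
      thus ?thesis unfolding coset_char[OF xi sH[OF i]] indicator_def using a y hc by simp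
    qed
    thus ?thesis unfolding feq by (intro sum.cong) auto
  qed
  show ?thesis unfolding P_functions_def
    apply (rule CollectI, rule conjI[OF fC], rule exI[of _ H0], rule conjI[OF H0c])
    apply (rule exI[of _ "1::nat"], rule exI[of _ "\<lambda>_. f"], rule exI[of _ "\<lambda>_ _. 1::complex"])
    using fC inv by simp
qed

end

theorem theorem4p2:
  fixes G :: "('a, 'b) monoid_scheme" and T :: "'a topology"
  assumes "locally_compact_group G T"
    and "totally_disconnected_space T"
  shows "smooth_functions G T = P_functions G T"
proof -
  have "tdlc G T" unfolding tdlc_def tdlc_axioms_def tgrp_def tgrp_axioms_def
    using assms by (auto simp: locally_compact_group_def topological_group_def)
  then interpret tdlc G T .
  show ?thesis
  proof
    show "smooth_functions G T \<subseteq> P_functions G T" using smooth_P by blast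
    show "P_functions G T \<subseteq> smooth_functions G T"
    proof
      fix f assume "f \<in> P_functions G T"
      then obtain H n fs \<phi> where fC: "f \<in> Cc T" and Hc: "compact_open_subgroup G T H"
        and a: "\<forall>i<(n::nat). fs i \<in> Cc T \<and> continuous_map (subtopology T H) euclidean (\<phi> i)"
        and d: "\<forall>x\<in>carrier G. \<forall>h\<in>H. f (x \<otimes>\<^bsub>G\<^esub> h) = (\<Sum>i<n. fs i x * \<phi> i h)"
        unfolding P_functions_def by blast
      obtain K where "compact_open_subgroup G T K" "\<forall>x\<in>carrier G. \<forall>k\<in>K. f (x \<otimes>\<^bsub>G\<^esub> k) = f x"
        using invariance[OF fC Hc a d] by blast
      thus "f \<in> smooth_functions G T" using inv_smooth fC by blast
    qed
  qed
qed

end
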